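(* Let $d\ge3$, $\mathcal D=\mathbb S_1^{d-1}$, $M\in\mathrm{SL}(d+1,\mathbb R)$, $K=\mathcal G_{\mathcal D}(M)$, and let $(u_1,\vec v_1),\dots,(u_K,\vec v_K)\in\mathcal Q_{\mathcal D}(M)$ satisfy (V1)–(V3). If $(u,\vec v)\in\mathcal Q_{\mathcal D}(M)$ with $u\in(-1/2,1/2)$, then $|\vec v_K|\le|\vec v|$. Consequently, if $u_i\in(-1/2,1/2)$ for some $1\le i\le K$, then $i=K$.
   Context: $\mathbb S_1^{d-1}$ is the unit sphere. Row vectors in $\mathbb R^{d+1}$ are written $(u,\vec v)$, $u\in\mathbb R$, $\vec v\in\mathbb R^d$; $\mathbb Z^{d+1}M=\{\vec mM:\vec m\in\mathbb Z^{d+1}\}$. For $\mathcal D\subseteq\mathbb S_1^{d-1}$: $\mathcal Q_{\mathcal D}(M,t)=\{(u,\vec v)\in\mathbb Z^{d+1}M:-t<u<1-t,\ \vec v\in\mathbb R_{>0}\mathcal D\}$ for $t\in(0,1)$; $\mathcal Q_{\mathcal D}(M)=\{(u,\vec v)\in\mathbb Z^{d+1}M:|u|<1,\ \vec v\in\mathbb R_{>0}\mathcal D\}$; $F_{\mathcal D}(M,t)=\min\{|\vec v|:(u,\vec v)\in\mathcal Q_{\mathcal D}(M,t)\}$; $\mathcal F_{\mathcal D}(M)=\{F_{\mathcal D}(M,t):0<t<1\}$, $\mathcal G_{\mathcal D}(M)=|\mathcal F_{\mathcal D}(M)|$. Conditions: (V1) $0<|\vec v_1|<\cdots<|\vec v_K|$;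 (V2) each $\delta\in\mathcal F_{\mathcal D}(M)$ equals $|\vec v_i|$ for some $i$; (V3) for each $i$ there is $t\in(0,1)$ with $(u_i,\vec v_i)\in\mathcal Q_{\mathcal D}(M,t)$ and $|\vec v_i|=F_{\mathcal D}(M,t)$. *)

theory Defs
  imports Complex_Main "Jordan_Normal_Form.Determinant"
begin

definition vnorm :: "real vec \<Rightarrow> real" where
  "vnorm v = sqrt (\<Sum>i<dim_vec v. (v $ i)^2)"

definition unit_sphere :: "nat \<Rightarrow> real vec set" where
  "unit_sphere d = {x \<in> carrier_vec d. vnorm x = 1}"

definition pos_cone :: "real vec set \<Rightarrow> real vec set" where
  "pos_cone D = {c \<cdot>\<^sub>v x | c x. c > 0 \<and> x \<in> D}"

text \<open>Lattice Z^{d+1} M of row vectors m M with m integral (m M = M^T m).\<close>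
definition lattice :: "nat \<Rightarrow> real mat \<Rightarrow> real vec set" where
  "lattice d M = {transpose_mat M *\<^sub>v m | m. m \<in> carrier_vec (d+1) \<and> (\<forall>i<d+1. m $ i \<in> \<int>)}"

definition split_pt :: "nat \<Rightarrow> real vec \<Rightarrow> real \<times> real vec" where
  "split_pt d w = (w $ 0, vec d (\<lambda>i. w $ (Suc i)))"

definition Q_t :: "nat \<Rightarrow> real vec set \<Rightarrow> real mat \<Rightarrow> real \<Rightarrow> (real \<times> real vec) set" where
  "Q_t d D M t = {(u, v). (u, v) \<in> split_pt d ` lattice d M \<and> - t < u \<and> u < 1 - t \<and> v \<in> pos_cone D}"

definition Q :: "nat \<Rightarrow> real vec set \<Rightarrow> real mat \<Rightarrow> (real \<times> real vec) set" where
  "Q d D M = {(u, v). (u, v) \<in> split_pt d ` lattice d M \<and> \<bar>u\<bar> < 1 \<and> v \<in> pos_cone D}"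

definition F_t :: "nat \<Rightarrow> real vec set \<Rightarrow> real mat \<Rightarrow> real \<Rightarrow> real" where
  "F_t d D M t = Inf {vnorm v | u v. (u, v) \<in> Q_t d D M t}"

definition F_set :: "nat \<Rightarrow> real vec set \<Rightarrow> real mat \<Rightarrow> real set" where
  "F_set d D M = {F_t d D M t | t. 0 < t \<and> t < 1}"

definition G :: "nat \<Rightarrow> real vec set \<Rightarrow> real mat \<Rightarrow> nat" where
  "G d D M = card (F_set d D M)"

end

theory Submission
  imports Defs
begin

lemma vnorm_uminus: "vnorm (- v) = vnorm v"
  unfolding vnorm_def by simp

lemma neg_Q:
  assumes M: "M \<in> carrier_mat (d+1) (d+1)"
    and q: "(u, v) \<in> Q d (unit_sphere d) M"
  shows "(-u, -v) \<in> Q d (unit_sphere d) M"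
proof -
  from q obtain w where w: "w \<in> lattice d M" "split_pt d w = (u, v)"
    and au: "\<bar>u\<bar> < 1" and vc: "v \<in> pos_cone (unit_sphere d)"
    unfolding Q_def by auto
  from w(1) obtain m where m: "w = transpose_mat M *\<^sub>v m" "m \<in> carrier_vec (d+1)"
    "\<forall>i<d+1. m $ i \<in> \<int>" unfolding lattice_def by auto
  have tM: "transpose_mat M \<in> carrier_mat (d+1) (d+1)" using M by simp
  have nw: "- w = transpose_mat M *\<^sub>v (- m)"
    using m tM by (intro eq_vecI) (auto simp: scalar_prod_uminus_right)
  have "- w \<in> lattice d M"
    unfolding lattice_def using nw m by (auto intro!: exI[of _ "- m"])
  moreover have dw: "dim_vec w = d + 1" using m tM by simp
  have "split_pt d (- w) = (-u, -v)"
    using w(2) dw unfolding split_pt_def by (auto intro!: eq_vecI)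
  moreover have "-v \<in> pos_cone (unit_sphere d)"
  proof -
    from vc obtain c x where cx: "v = c \<cdot>\<^sub>v x" "c > 0" "x \<in> unit_sphere d"
      unfolding pos_cone_def by auto
    have "-x \<in> unit_sphere d" using cx(3) unfolding unit_sphere_def
      by (simp add: vnorm_uminus)
    moreover have "-v = c \<cdot>\<^sub>v (-x)" using cx(1) by (intro eq_vecI) auto
    ultimately show ?thesis unfolding pos_cone_def using cx(2) by blast
  qed
  ultimately show ?thesis unfolding Q_def using au by (auto intro: image_eqI[of _ _ "-w"])
qed

lemma F_le:
  assumes "(u, v) \<in> Q_t d D M t"
  shows "F_t d D M t \<le> vnorm v"
  unfolding F_t_def
proof (rule cInf_lower)
  show "vnorm v \<in> {vnorm v |u v. (u, v) \<in> Q_t d D M t}" using assms by blast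
  show "bdd_below {vnorm v |u v. (u, v) \<in> Q_t d D M t}"
    by (rule bdd_belowI[of _ 0]) (auto simp: vnorm_def intro!: sum_nonneg)
qed

lemma half_bound:
  assumes M: "M \<in> carrier_mat (d+1) (d+1)"
    and q: "(u, v) \<in> Q d (unit_sphere d) M" and h: "-1/2 < u" "u < 1/2"
    and t: "0 < t" "t < 1"
  shows "F_t d (unit_sphere d) M t \<le> vnorm v"
proof (cases "-t < u \<and> u < 1 - t")
  case True
  then have "(u, v) \<in> Q_t d (unit_sphere d) M t" using q unfolding Q_def Q_t_def by auto
  then show ?thesis by (rule F_le)
next
  case False
  have n: "(-u, -v) \<in> Q d (unit_sphere d) M" by (rule neg_Q[OF M q])
  have "-t < -u \<and> -u < 1 - t" using False h t by auto
  then have "(-u, -v) \<in> Q_t d (unit_sphere d) M t" using n unfolding Q_def Q_t_def by auto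
  then have "F_t d (unit_sphere d) M t \<le> vnorm (-v)" by (rule F_le)
  then show ?thesis by (simp add: vnorm_uminus)
qed

theorem proposition6p2:
  fixes d K :: nat and M :: "real mat" and us :: "nat \<Rightarrow> real" and vs :: "nat \<Rightarrow> real vec"
  assumes d3: "d \<ge> 3"
    and M_SL: "M \<in> carrier_mat (d+1) (d+1)" "det M = 1"
    and K_def: "K = G d (unit_sphere d) M"
    and inQ: "\<forall>i\<in>{1..K}. (us i, vs i) \<in> Q d (unit_sphere d) M"
    and V1: "0 < vnorm (vs 1)" "\<forall>i\<in>{1..K}. \<forall>j\<in>{1..K}. i < j \<longrightarrow> vnorm (vs i) < vnorm (vs j)"
    and V2: "\<forall>\<delta>\<in>F_set d (unit_sphere d) M. \<exists>i\<in>{1..K}. \<delta> = vnorm (vs i)"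
    and V3: "\<forall>i\<in>{1..K}. \<exists>t. 0 < t \<and> t < 1 \<and> (us i, vs i) \<in> Q_t d (unit_sphere d) M t
               \<and> vnorm (vs i) = F_t d (unit_sphere d) M t"
  shows "(\<forall>u v. (u, v) \<in> Q d (unit_sphere d) M \<and> -1/2 < u \<and> u < 1/2 \<longrightarrow> vnorm (vs K) \<le> vnorm v)
       \<and> (\<forall>i\<in>{1..K}. -1/2 < us i \<and> us i < 1/2 \<longrightarrow> i = K)"
proof -
  have "F_t d (unit_sphere d) M (1/2) \<in> F_set d (unit_sphere d) M"
    unfolding F_set_def by (auto intro!: exI[of _ "1/2"])
  then have K1: "K \<in> {1..K}" using V2 by auto
  then obtain t where t: "0 < t" "t < 1" "vnorm (vs K) = F_t d (unit_sphere d) M t"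
    using V3 by blast
  have A: "\<forall>u v. (u, v) \<in> Q d (unit_sphere d) M \<and> -1/2 < u \<and> u < 1/2 \<longrightarrow> vnorm (vs K) \<le> vnorm v"
  proof (intro allI impI)
    fix u v assume a: "(u, v) \<in> Q d (unit_sphere d) M \<and> -1/2 < u \<and> u < 1/2"
    have "F_t d (unit_sphere d) M t \<le> vnorm v"
      using a by (intro half_bound[OF M_SL(1) _ _ _ t(1,2)]) auto
    then show "vnorm (vs K) \<le> vnorm v" using t(3) by simp
  qed
  show ?thesis
  proof (intro conjI A ballI impI)
    fix i assume i: "i \<in> {1..K}" and h: "-1/2 < us i \<and> us i < 1/2"
    have "vnorm (vs K) \<le> vnorm (vs i)" using A inQ i h by blast
    moreover have "i \<le> K" using i by simp
    moreover have "i < K \<Longrightarrow> vnorm (vs i) < vnorm (vs K)" using V1(2) i K1 by blast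
    ultimately show "i = K" by linarith
  qed
qed

end
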